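(* Let $l\le n$ be positive integers and let $\mathbb F\subseteq\mathbb D_1^n$ be an index set of local height $l$. If $|\mathbb F|<2^l-1$, then there exists an index $(k,j)\in\mathbb D_1^n\setminus\mathbb F$ such that $\mathrm{lh}(\mathbb F\cup\{(k,j)\})=l$.
   Context: Dyadic intervals: $\Delta_k^{(j)}:=[\frac{j-1}{2^k},\frac{j}{2^k})$ for $k\ge0$. Dyadic tree $\mathbb D:=\{(k,j):k\ge1;\ j=1,\dots,2^{k-1}\}$; $\mathbb D_1^n:=\{(k,j):k=1,\dots,n;\ j=1,\dots,2^{k-1}\}$. Branches: $\mathbb B(t):=\{(k,j)\in\mathbb D:t\in\Delta_{k-1}^{(j)}\}$ for $t\in[0,1)$; local height of a finite $\mathbb F\subseteq\mathbb D$: $\mathrm{lh}(\mathbb F):=\max_{t\in[0,1)}|\mathbb F\cap\mathbb B(t)|$. *)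

theory Defs
  imports Complex_Main
begin

definition dyadic_interval :: "nat \<Rightarrow> nat \<Rightarrow> real set" where
  "dyadic_interval k j = {(real j - 1) / 2 ^ k ..< real j / 2 ^ k}"

definition dyadic_tree_upto :: "nat \<Rightarrow> (nat \<times> nat) set" where
  "dyadic_tree_upto n = {(k, j). 1 \<le> k \<and> k \<le> n \<and> 1 \<le> j \<and> j \<le> 2 ^ (k - 1)}"

definition dyadic_tree :: "(nat \<times> nat) set" where
  "dyadic_tree = {(k, j). 1 \<le> k \<and> 1 \<le> j \<and> j \<le> 2 ^ (k - 1)}"

definition branch :: "real \<Rightarrow> (nat \<times> nat) set" where
  "branch t = {(k, j). (k, j) \<in> dyadic_tree \<and> t \<in> dyadic_interval (k - 1) j}"

definition local_height :: "(nat \<times> nat) set \<Rightarrow> nat" where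
  "local_height F = Max ((\<lambda>t. card (F \<inter> branch t)) ` {0..<1})"

end

theory Submission
  imports Defs
begin

definition pth :: "nat \<Rightarrow> bool list \<Rightarrow> bool list set" where
  "pth d p = {w. length w < d \<and> take (length w) p = w}"

lemma pth_Cons:
  "w \<in> pth (Suc d) (b # q) \<longleftrightarrow> w = [] \<or> (\<exists>w'. w = b # w' \<and> w' \<in> pth d q)"
  by (cases w) (auto simp: pth_def)

lemma finite_pth: "finite (pth d p)"
proof -
  have "pth d p \<subseteq> (\<lambda>i. take i p) ` {..<d}"
    unfolding pth_def by (auto intro!: image_eqI)
  then show ?thesis using finite_subset by blast
qed

lemma card_pth_le: "card (pth d p) \<le> d"
proof -
  have "pth d p \<subseteq> (\<lambda>i. take i p) ` {..<d}"
    unfolding pth_def by (auto intro!: image_eqI)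
  then show ?thesis
    by (metis card_image_le card_lessThan finite_lessThan card_mono finite_imageI order_trans)
qed

lemma key:
  "finite G \<Longrightarrow> G \<subseteq> {w. length w < d} \<Longrightarrow> h \<le> d \<Longrightarrow>
   (\<forall>w. length w < d \<and> w \<notin> G \<longrightarrow> (\<exists>p. w \<in> pth d p \<and> h \<le> card (G \<inter> pth d p)))
   \<Longrightarrow> 2 ^ h - 1 \<le> card G"
proof (induction d arbitrary: G h)
  case 0
  then show ?case by simp
next
  case (Suc d)
  define GB where "GB b = {w. b # w \<in> G}" for b
  have finB: "finite (GB b)" for b
  proof -
    have "GB b \<subseteq> tl ` G" unfolding GB_def by (force intro: image_eqI)
    then show ?thesis using Suc.prems(1) finite_subset by blast
  qed
  have subB: "GB b \<subseteq> {w. length w < d}" for b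
    using Suc.prems(2) unfolding GB_def by auto
  have inter: "G \<inter> pth (Suc d) (b # q) = (G \<inter> {[]}) \<union> Cons b ` (GB b \<inter> pth d q)" for b q
    unfolding GB_def using pth_Cons by auto
  have cardI: "card (G \<inter> pth (Suc d) (b # q)) = card (G \<inter> {[]}) + card (GB b \<inter> pth d q)" for b q
  proof -
    have "card ((G \<inter> {[]}) \<union> Cons b ` (GB b \<inter> pth d q)) = card (G \<inter> {[]}) + card (Cons b ` (GB b \<inter> pth d q))"
      by (rule card_Un_disjoint) (auto intro: finite_subset[OF _ finB])
    also have "card (Cons b ` (GB b \<inter> pth d q)) = card (GB b \<inter> pth d q)"
      by (rule card_image) auto
    finally show ?thesis using inter by simp
  qed
  have trans: "\<exists>q. w \<in> pth d q \<and> h' \<le> card (GB b \<inter> pth d q)"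
    if "length w < d" "w \<notin> GB b" "h' + card (G \<inter> {[]}) \<le> h" for w b h'
  proof -
    have "length (b # w) < Suc d" "b # w \<notin> G" using that GB_def by auto
    then obtain p where p: "b # w \<in> pth (Suc d) p" "h \<le> card (G \<inter> pth (Suc d) p)"
      using Suc.prems(4) by blast
    then obtain q where q: "p = b # q" unfolding pth_def by (cases p) auto
    have "w \<in> pth d q" using p(1) q pth_Cons by auto
    moreover have "h' \<le> card (GB b \<inter> pth d q)" using p(2) q cardI that(3) by simp
    ultimately show ?thesis by blast
  qed
  have cardG: "card G \<ge> card (G \<inter> {[]}) + card (GB True) + card (GB False)"
  proof -
    have sub: "(G \<inter> {[]}) \<union> (Cons True ` GB True \<union> Cons False ` GB False) \<subseteq> G"
      unfolding GB_def by auto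
    have "card ((G \<inter> {[]}) \<union> (Cons True ` GB True \<union> Cons False ` GB False))
       = card (G \<inter> {[]}) + card (Cons True ` GB True \<union> Cons False ` GB False)"
      by (rule card_Un_disjoint) (auto simp: finB)
    also have "card (Cons True ` GB True \<union> Cons False ` GB False) = card (Cons True ` GB True) + card (Cons False ` GB False)"
      by (rule card_Un_disjoint) (auto simp: finB)
    also have "card (Cons True ` GB True) = card (GB True)" by (rule card_image) auto
    also have "card (Cons False ` GB False) = card (GB False)" by (rule card_image) auto
    finally show ?thesis using card_mono[OF Suc.prems(1) sub] by simp
  qed
  show ?case
  proof (cases "h = 0")
    case True then show ?thesis by simp
  next
    case hpos: False
    show ?thesis
    proof (cases "[] \<in> G")
      case True
      then have c1: "card (G \<inter> {[]}) = 1" by simp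
      have IH: "2 ^ (h - 1) - 1 \<le> card (GB b)" for b
      proof (rule Suc.IH[OF finB subB])
        show "h - 1 \<le> d" using Suc.prems(3) by simp
        show "\<forall>w. length w < d \<and> w \<notin> GB b \<longrightarrow> (\<exists>q. w \<in> pth d q \<and> h - 1 \<le> card (GB b \<inter> pth d q))"
        proof (intro allI impI)
          fix w assume "length w < d \<and> w \<notin> GB b"
          then show "\<exists>q. w \<in> pth d q \<and> h - 1 \<le> card (GB b \<inter> pth d q)"
            using trans[of w b "h - 1"] c1 hpos by auto
        qed
      qed
      define X where "X = (2::nat) ^ (h - 1)"
      have X1: "1 \<le> X" unfolding X_def by simp
      have "2 ^ h = 2 * X" unfolding X_def using hpos by (metis power_eq_if)
      then show ?thesis using IH[of True] IH[of False] cardG c1 X1 unfolding X_def[symmetric] by linarith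
    next
      case False
      then have c0: "card (G \<inter> {[]}) = 0" by simp
      have "length ([]::bool list) < Suc d" "[] \<notin> G" using False by auto
      then obtain p where p: "[] \<in> pth (Suc d) p" "h \<le> card (G \<inter> pth (Suc d) p)"
        using Suc.prems(4) by blast
      have hd: "h \<le> d"
      proof (cases p)
        case Nil
        then have "G \<inter> pth (Suc d) p \<subseteq> {[]}" unfolding pth_def by auto
        then have "G \<inter> pth (Suc d) p = {}" using False by auto
        then show ?thesis using p hpos by simp
      next
        case (Cons b q)
        then have "card (G \<inter> pth (Suc d) p) = card (GB b \<inter> pth d q)" using cardI c0 by simp
        also have "\<dots> \<le> card (pth d q)" by (rule card_mono) (auto simp: finite_pth)
        also have "\<dots> \<le> d" by (rule card_pth_le)
        finally show ?thesis using p by simp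
      qed
      have IH: "2 ^ h - 1 \<le> card (GB True)"
        apply (rule Suc.IH[OF finB subB hd])
        using trans c0 by simp
      then show ?thesis using cardG by simp
    qed
  qed
qed

fun bin :: "nat \<Rightarrow> nat \<Rightarrow> bool list" where
  "bin 0 a = []"
| "bin (Suc k) a = bin k (a div 2) @ [odd a]"

fun rval :: "bool list \<Rightarrow> nat" where
  "rval [] = 0"
| "rval (b # w) = of_bool b + 2 * rval w"

definition val :: "bool list \<Rightarrow> nat" where "val w = rval (rev w)"

lemma length_bin[simp]: "length (bin m a) = m"
  by (induction m arbitrary: a) auto

lemma take_bin: "i \<le> m \<Longrightarrow> take i (bin m x) = bin i (x div 2 ^ (m - i))"
proof (induction m arbitrary: x)
  case 0 then show ?case by simp
next
  case (Suc m)
  show ?case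
  proof (cases "i = Suc m")
    case True then show ?thesis by (simp del: bin.simps)
  next
    case False
    then have "i \<le> m" using Suc.prems by simp
    then have "take i (bin (Suc m) x) = take i (bin m (x div 2))" by simp
    also have "\<dots> = bin i (x div 2 div 2 ^ (m - i))" using Suc.IH \<open>i \<le> m\<close> by simp
    also have "x div 2 div 2 ^ (m - i) = x div 2 ^ (Suc m - i)"
      using \<open>i \<le> m\<close> by (simp add: div_mult2_eq Suc_diff_le)
    finally show ?thesis .
  qed
qed

lemma val_snoc: "val (w @ [b]) = of_bool b + 2 * val w"
  by (simp add: val_def)

lemma bin_val: "bin (length w) (val w) = w"
proof (induction w rule: rev_induct)
  case Nil then show ?case by simp
next
  case (snoc b w)
  have "(of_bool b + 2 * val w) div 2 = val w" by (cases b) auto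
  moreover have "odd (of_bool b + 2 * val w) = b" by (cases b) auto
  ultimately show ?case using snoc by (simp add: val_snoc)
qed

lemma val_bin: "a < 2 ^ m \<Longrightarrow> val (bin m a) = a"
proof (induction m arbitrary: a)
  case 0 then show ?case by (simp add: val_def)
next
  case (Suc m)
  have "a div 2 < 2 ^ m" using Suc.prems by auto
  then have "val (bin m (a div 2)) = a div 2" using Suc.IH by blast
  then show ?case by (simp add: val_snoc)
qed

definition wd :: "nat \<times> nat \<Rightarrow> bool list" where
  "wd v = bin (fst v - 1) (snd v - 1)"

lemma wd_inj: "inj_on wd (dyadic_tree_upto n)"
proof (rule inj_onI)
  fix u v assume u: "u \<in> dyadic_tree_upto n" and v: "v \<in> dyadic_tree_upto n" and e: "wd u = wd v"
  obtain k j where kj: "u = (k, j)" by (cases u)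
  obtain k' j' where kj': "v = (k', j')" by (cases v)
  have "k - 1 = k' - 1" using e kj kj' wd_def by (metis fst_conv length_bin)
  then have kk: "k = k'" using u v kj kj' by (auto simp: dyadic_tree_upto_def)
  have "j - 1 < 2 ^ (k - 1)" "j' - 1 < 2 ^ (k - 1)" using u v kj kj' kk by (auto simp: dyadic_tree_upto_def)
  then have "j - 1 = j' - 1" using e kj kj' kk wd_def by (metis fst_conv snd_conv val_bin)
  then show "u = v" using u v kj kj' kk by (auto simp: dyadic_tree_upto_def)
qed

lemma wd_range: "v \<in> dyadic_tree_upto n \<Longrightarrow> length (wd v) < n"
  by (auto simp: wd_def dyadic_tree_upto_def)

lemma wd_surj: "length w < n \<Longrightarrow> (length w + 1, val w + 1) \<in> dyadic_tree_upto n \<and> wd (length w + 1, val w + 1) = w"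
proof -
  assume "length w < n"
  moreover have "val w < 2 ^ length w"
  proof (induction w rule: rev_induct)
    case Nil then show ?case by (simp add: val_def)
  next
    case (snoc b w) then show ?case by (cases b) (auto simp: val_snoc)
  qed
  ultimately show ?thesis by (auto simp: dyadic_tree_upto_def wd_def bin_val)
qed

lemma branch_pth:
  assumes t: "t \<in> {0..<1}" and v: "v \<in> dyadic_tree_upto n" and b: "v \<in> branch t"
  shows "wd v \<in> pth n (bin n (nat \<lfloor>t * 2 ^ n\<rfloor>))"
proof -
  obtain k j where kj: "v = (k, j)" by (cases v)
  have k: "1 \<le> k" "k \<le> n" "1 \<le> j" using v kj by (auto simp: dyadic_tree_upto_def)
  have mem: "(real j - 1) / 2 ^ (k - 1) \<le> t" "t < real j / 2 ^ (k - 1)"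
    using b kj by (auto simp: branch_def dyadic_interval_def)
  then have "real j - 1 \<le> t * 2 ^ (k - 1)" "t * 2 ^ (k - 1) < real j"
    by (auto simp: field_simps)
  then have fl: "\<lfloor>t * 2 ^ (k - 1)\<rfloor> = int (j - 1)"
    using k by (simp add: floor_eq_iff of_nat_diff)
  have pw: "(2::real) ^ n = 2 ^ (k - 1) * 2 ^ (n - (k - 1))"
    using k by (simp add: power_add[symmetric])
  have "t * 2 ^ (k - 1) = t * 2 ^ n / real_of_int (int (2 ^ (n - (k - 1))))"
    unfolding pw by simp
  then have "\<lfloor>t * 2 ^ (k - 1)\<rfloor> = \<lfloor>t * 2 ^ n\<rfloor> div int (2 ^ (n - (k - 1)))"
    using floor_divide_real_eq_div by (metis of_nat_0_le_iff)
  then have "int (j - 1) = int (nat \<lfloor>t * 2 ^ n\<rfloor>) div int (2 ^ (n - (k - 1)))"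
    using fl t by simp
  then have jj: "j - 1 = nat \<lfloor>t * 2 ^ n\<rfloor> div 2 ^ (n - (k - 1))"
    by (metis of_nat_eq_iff zdiv_int)
  have "take (k - 1) (bin n (nat \<lfloor>t * 2 ^ n\<rfloor>)) = bin (k - 1) (j - 1)"
    using take_bin[of "k - 1" n] k jj by simp
  then show ?thesis using k kj by (simp add: pth_def wd_def)
qed

lemma lh_props:
  assumes "finite H"
  shows "\<exists>t\<in>{0..<1}. local_height H = card (H \<inter> branch t)"
    and "t \<in> {0..<1} \<Longrightarrow> card (H \<inter> branch t) \<le> local_height H"
proof -
  have fin: "finite ((\<lambda>t. card (H \<inter> branch t)) ` {0..<(1::real)})"
    by (rule finite_subset[of _ "{..card H}"]) (auto intro!: card_mono assms)
  have ne: "(\<lambda>t. card (H \<inter> branch t)) ` {0..<(1::real)} \<noteq> {}" by auto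
  show "\<exists>t\<in>{0..<1}. local_height H = card (H \<inter> branch t)"
    using Max_in[OF fin ne] unfolding local_height_def by auto
  show "t \<in> {0..<1} \<Longrightarrow> card (H \<inter> branch t) \<le> local_height H"
    using Max_ge[OF fin] unfolding local_height_def by auto
qed

theorem lemma4p1:
  fixes l n :: nat and F :: "(nat \<times> nat) set"
  assumes "1 \<le> l" and "l \<le> n"
    and "F \<subseteq> dyadic_tree_upto n"
    and "local_height F = l"
    and "card F < 2 ^ l - 1"
  shows "\<exists>k j. (k, j) \<in> dyadic_tree_upto n - F \<and> local_height (F \<union> {(k, j)}) = l"
proof (rule ccontr)
  assume nex: "\<not> ?thesis"
  have finD: "finite (dyadic_tree_upto n)"
    by (rule finite_subset[of _ "{..n} \<times> {..2^n}"]) (auto simp: dyadic_tree_upto_def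
        intro: order_trans[OF _ power_increasing[of _ n "2::nat"]])
  have finF: "finite F" using assms(3) finD finite_subset by blast
  define G where "G = wd ` F"
  have injF: "inj_on wd F" using wd_inj inj_on_subset assms(3) by blast
  have cG: "card G = card F" unfolding G_def using card_image[OF injF] .
  have finG: "finite G" unfolding G_def using finF by simp
  have subG: "G \<subseteq> {w. length w < n}" unfolding G_def using assms(3) wd_range by blast
  have cardle: "card (F \<inter> branch t) \<le> card (G \<inter> pth n (bin n (nat \<lfloor>t * 2 ^ n\<rfloor>)))"
    if t: "t \<in> {0..<1}" for t
  proof -
    have "wd ` (F \<inter> branch t) \<subseteq> G \<inter> pth n (bin n (nat \<lfloor>t * 2 ^ n\<rfloor>))"
      unfolding G_def using branch_pth[OF t] assms(3) by blast
    moreover have "card (wd ` (F \<inter> branch t)) = card (F \<inter> branch t)"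
      using card_image inj_on_subset[OF injF] by blast
    ultimately show ?thesis using card_mono finG by (metis finite_Int)
  qed
  have hyp: "\<forall>w. length w < n \<and> w \<notin> G \<longrightarrow> (\<exists>p. w \<in> pth n p \<and> l \<le> card (G \<inter> pth n p))"
  proof (intro allI impI)
    fix w assume w: "length w < n \<and> w \<notin> G"
    define v where "v = (length w + 1, val w + 1)"
    have vD: "v \<in> dyadic_tree_upto n" and wv: "wd v = w" using wd_surj w v_def by auto
    have vF: "v \<notin> F" using w wv G_def by blast
    have neq: "local_height (F \<union> {v}) \<noteq> l" using nex vD vF v_def by auto
    have finFv: "finite (F \<union> {v})" using finF by simp
    obtain t0 where t0: "t0 \<in> {0..<1}" "local_height (F \<union> {v}) = card ((F \<union> {v}) \<inter> branch t0)"
      using lh_props(1)[OF finFv] by blast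
    obtain t1 where t1: "t1 \<in> {0..<1}" "l = card (F \<inter> branch t1)"
      using lh_props(1)[OF finF] assms(4) by metis
    have "card (F \<inter> branch t1) \<le> card ((F \<union> {v}) \<inter> branch t1)"
      by (rule card_mono) (auto simp: finF)
    also have "\<dots> \<le> local_height (F \<union> {v})" using lh_props(2)[OF finFv t1(1)] .
    finally have gt: "l < local_height (F \<union> {v})" using t1 neq by simp
    have vb: "v \<in> branch t0"
    proof (rule ccontr)
      assume "v \<notin> branch t0"
      then have "(F \<union> {v}) \<inter> branch t0 = F \<inter> branch t0" by auto
      then show False using gt t0 lh_props(2)[OF finF t0(1)] assms(4) by simp
    qed
    have "(F \<union> {v}) \<inter> branch t0 = insert v (F \<inter> branch t0)" using vb by auto
    then have "card ((F \<union> {v}) \<inter> branch t0) = Suc (card (F \<inter> branch t0))"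
      using vF finF by simp
    then have "l \<le> card (F \<inter> branch t0)" using gt t0 by simp
    then have "l \<le> card (G \<inter> pth n (bin n (nat \<lfloor>t0 * 2 ^ n\<rfloor>)))"
      using cardle[OF t0(1)] by simp
    moreover have "w \<in> pth n (bin n (nat \<lfloor>t0 * 2 ^ n\<rfloor>))"
      using branch_pth[OF t0(1) vD vb] wv by simp
    ultimately show "\<exists>p. w \<in> pth n p \<and> l \<le> card (G \<inter> pth n p)" by blast
  qed
  have "2 ^ l - 1 \<le> card G" using key[OF finG subG assms(2) hyp] .
  then show False using cG assms(5) by simp
qed

end
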